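(* On the 36-hole square board $S=\{0,1,\dots,5\}^2$, let $b$ be a board position which is solvable and which is invariant under the $180^\circ$ rotation $(x,y)\mapsto(5-x,5-y)$. Equivalently, $b$ has one of the symmetry types 1–5: square symmetry, $90^\circ$ rotational symmetry, both diagonal reflections, both orthogonal reflections, or $180^\circ$ rotation. Then $b$ lies in position class A, the position class of the four-peg position $\{(2,2),(2,3),(3,2),(3,3)\}$.
   Context: A board position on $S=\{0,\dots,5\}^2$ is a subset of $S$ (the occupied holes). A jump: given $d\in\{(\pm1,0),(0,\pm1)\}$ and $p$ with $p,p+d,p+2d\in S$, $p,p+d$ occupied and $p+2d$ empty, the jump removes the pegs at $p,p+d$ and puts a peg at $p+2d$. A position is solvable if some sequence of jumps leads to exactly one peg. Position classes. For a position $b$ and $i\in\{0,1,2\}$ let $N_i=|\{(x,y)\in b: x+y\equiv i\pmod 3\}|$ and $M_i=|\{(x,y)\in b: x-y\equiv i\pmod 3\}|$. The position class of $b$ is the vector $$(N_1+N_2,\ N_0+N_2,\ N_0+N_1,\ M_1+M_2,\ M_0+M_2,\ M_0+M_1)\bmod 2.$$ Two positions are in the same position class iff these vectors agree. The symmetries are the dihedral group of the square acting about the centre $(2.5,2.5)$. *)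

theory Defs
  imports Main
begin

definition Board :: "(int \<times> int) set" where
  "Board = {0..5} \<times> {0..5}"

definition dirs :: "(int \<times> int) set" where
  "dirs = {(1,0), (-1,0), (0,1), (0,-1)}"

definition padd :: "int \<times> int \<Rightarrow> int \<times> int \<Rightarrow> int \<times> int" where
  "padd p d = (fst p + fst d, snd p + snd d)"

definition psc :: "int \<Rightarrow> int \<times> int \<Rightarrow> int \<times> int" where
  "psc k d = (k * fst d, k * snd d)"

definition jump :: "(int \<times> int) set \<Rightarrow> (int \<times> int) set \<Rightarrow> bool" where
  "jump b b' \<longleftrightarrow> (\<exists>d p. d \<in> dirs \<and>
      p \<in> Board \<and> padd p d \<in> Board \<and> padd p (psc 2 d) \<in> Board \<and>
      p \<in> b \<and> padd p d \<in> b \<and> padd p (psc 2 d) \<notin> b \<and>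
      b' = insert (padd p (psc 2 d)) (b - {p, padd p d}))"

definition position :: "(int \<times> int) set \<Rightarrow> bool" where
  "position b \<longleftrightarrow> b \<subseteq> Board"

definition solvable :: "(int \<times> int) set \<Rightarrow> bool" where
  "solvable b \<longleftrightarrow> (\<exists>b'. jump\<^sup>*\<^sup>* b b' \<and> card b' = 1)"

definition Ncount :: "(int \<times> int) set \<Rightarrow> int \<Rightarrow> nat" where
  "Ncount b i = card {q \<in> b. (fst q + snd q) mod 3 = i}"

definition Mcount :: "(int \<times> int) set \<Rightarrow> int \<Rightarrow> nat" where
  "Mcount b i = card {q \<in> b. (fst q - snd q) mod 3 = i}"

definition pos_class :: "(int \<times> int) set \<Rightarrow> bool list" where
  "pos_class b =
     [odd (Ncount b 1 + Ncount b 2), odd (Ncount b 0 + Ncount b 2), odd (Ncount b 0 + Ncount b 1),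
      odd (Mcount b 1 + Mcount b 2), odd (Mcount b 0 + Mcount b 2), odd (Mcount b 0 + Mcount b 1)]"

definition rot180 :: "int \<times> int \<Rightarrow> int \<times> int" where
  "rot180 q = (5 - fst q, 5 - snd q)"

definition classA :: "(int \<times> int) set" where
  "classA = {(2,2), (2,3), (3,2), (3,3)}"

end

theory Submission
  imports Defs
begin

lemma flip:
  assumes "finite b" "p \<in> b" "e \<in> b" "c \<notin> b"
    "f p \<noteq> f e" "f p \<noteq> f c" "f e \<noteq> f c" "i \<in> {f p, f e, f c}"
  shows "odd (card {q \<in> insert c (b - {p, e}). f q = i}) \<longleftrightarrow> \<not> odd (card {q \<in> b. f q = i})"
proof -
  have fin: "finite {q \<in> b. f q = i}" using assms(1) by simp
  consider "i = f p" | "i = f e" | "i = f c" using assms(8) by blast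
  then show ?thesis
  proof cases
    case 1
    have "{q \<in> insert c (b - {p, e}). f q = i} = {q \<in> b. f q = i} - {p}"
      using 1 assms by auto
    moreover have "p \<in> {q \<in> b. f q = i}" using 1 assms by auto
    ultimately show ?thesis using fin
      by (metis card_Diff1_less card_Diff_singleton card_gt_0_iff empty_iff even_Suc Suc_pred')
  next
    case 2
    have "{q \<in> insert c (b - {p, e}). f q = i} = {q \<in> b. f q = i} - {e}"
      using 2 assms by auto
    moreover have "e \<in> {q \<in> b. f q = i}" using 2 assms by auto
    ultimately show ?thesis using fin
      by (metis card_Diff1_less card_Diff_singleton card_gt_0_iff empty_iff even_Suc Suc_pred')
  next
    case 3
    have "{q \<in> insert c (b - {p, e}). f q = i} = insert c {q \<in> b. f q = i}"
      using 3 assms by auto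
    moreover have "c \<notin> {q \<in> b. f q = i}" using assms by auto
    ultimately show ?thesis using fin by simp
  qed
qed

lemma jump_inv:
  assumes "jump b b'" "finite b"
  shows "pos_class b' = pos_class b \<and> finite b' \<and> (b \<subseteq> Board \<longrightarrow> b' \<subseteq> Board)"
proof -
  obtain d p where d: "d \<in> dirs" and pb: "p \<in> Board" "padd p d \<in> Board" "padd p (psc 2 d) \<in> Board"
    and inb: "p \<in> b" "padd p d \<in> b" "padd p (psc 2 d) \<notin> b"
    and b': "b' = insert (padd p (psc 2 d)) (b - {p, padd p d})"
    using assms(1) unfolding jump_def by blast
  let ?e = "padd p d" and ?c = "padd p (psc 2 d)"
  define fN where "fN = (\<lambda>q::int\<times>int. (fst q + snd q) mod 3)"
  define fM where "fM = (\<lambda>q::int\<times>int. (fst q - snd q) mod 3)"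
  have N: "fN p \<noteq> fN ?e \<and> fN p \<noteq> fN ?c \<and> fN ?e \<noteq> fN ?c \<and> {fN p, fN ?e, fN ?c} = {0,1,2}"
    using d unfolding dirs_def fN_def padd_def psc_def
    by (cases p) (auto, presburger+)
  have M: "fM p \<noteq> fM ?e \<and> fM p \<noteq> fM ?c \<and> fM ?e \<noteq> fM ?c \<and> {fM p, fM ?e, fM ?c} = {0,1,2}"
    using d unfolding dirs_def fM_def padd_def psc_def
    by (cases p) (auto, presburger+)
  have pe: "p \<noteq> ?e" using d unfolding dirs_def padd_def by (cases p) auto
  have Nf: "odd (Ncount b' i) \<longleftrightarrow> \<not> odd (Ncount b i)" if "i \<in> {0,1,2}" for i
    unfolding Ncount_def b'
    using flip[of b p ?e ?c fN i] assms(2) inb N that unfolding fN_def by auto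
  have Mf: "odd (Mcount b' i) \<longleftrightarrow> \<not> odd (Mcount b i)" if "i \<in> {0,1,2}" for i
    unfolding Mcount_def b'
    using flip[of b p ?e ?c fM i] assms(2) inb M that unfolding fM_def by auto
  have "pos_class b' = pos_class b"
    unfolding pos_class_def using Nf[of 0] Nf[of 1] Nf[of 2] Mf[of 0] Mf[of 1] Mf[of 2] by (simp, argo)
  moreover have "finite b'" using b' assms(2) by simp
  moreover have "b \<subseteq> Board \<longrightarrow> b' \<subseteq> Board" using b' pb by auto
  ultimately show ?thesis by blast
qed

lemma star_inv:
  assumes "jump\<^sup>*\<^sup>* b b'" "finite b" "b \<subseteq> Board"
  shows "pos_class b' = pos_class b \<and> finite b' \<and> b' \<subseteq> Board"
  using assms
proof (induction rule: rtranclp_induct)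
  case base then show ?case by simp
next
  case (step y z) then show ?case using jump_inv[of y z] by auto
qed

lemma rot_inv[simp]: "rot180 (rot180 q) = q" unfolding rot180_def by simp

lemma inj_rot: "inj rot180" by (metis injI rot_inv)

lemma rot_filter:
  assumes "rot180 ` b = b"
  shows "card {q \<in> b. P (rot180 q)} = card {q \<in> b. P q}"
proof -
  have "rot180 ` {q \<in> b. P (rot180 q)} = {q \<in> b. P q}"
  proof
    show "rot180 ` {q \<in> b. P (rot180 q)} \<subseteq> {q \<in> b. P q}" using assms by auto
    show "{q \<in> b. P q} \<subseteq> rot180 ` {q \<in> b. P (rot180 q)}"
    proof
      fix q assume "q \<in> {q \<in> b. P q}"
      then have "rot180 q \<in> b" "P (rot180 (rot180 q))" using assms by auto
      then show "q \<in> rot180 ` {q \<in> b. P (rot180 q)}" by (metis (mono_tags, lifting) image_eqI mem_Collect_eq rot_inv)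
    qed
  qed
  then show ?thesis using card_image[OF inj_on_subset[OF inj_rot subset_UNIV]] by metis
qed

lemma even_sym:
  assumes "finite A" "rot180 ` A = A"
  shows "even (card A)"
proof -
  define L where "L = {q \<in> A. fst q \<le> 2}"
  have "A = L \<union> rot180 ` L"
  proof
    show "A \<subseteq> L \<union> rot180 ` L"
    proof
      fix q assume q: "q \<in> A"
      show "q \<in> L \<union> rot180 ` L"
      proof (cases "fst q \<le> 2")
        case True then show ?thesis using q L_def by auto
      next
        case False
        have "rot180 q \<in> L" using q False assms(2) unfolding L_def rot180_def by force
        then show ?thesis by (metis UnI2 image_eqI rot_inv)
      qed
    qed
    show "L \<union> rot180 ` L \<subseteq> A" using assms(2) L_def by auto
  qed
  moreover have "L \<inter> rot180 ` L = {}" unfolding L_def rot180_def by auto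
  moreover have "finite L" using assms(1) L_def by simp
  moreover have "card (rot180 ` L) = card L" using card_image[OF inj_on_subset[OF inj_rot subset_UNIV]] by metis
  ultimately have "card A = 2 * card L" by (metis card_Un_disjoint finite_imageI mult_2)
  then show ?thesis by simp
qed

lemma sym_filter:
  assumes "rot180 ` b = b" "\<And>q. P (rot180 q) \<longleftrightarrow> P q"
  shows "rot180 ` {q \<in> b. P q} = {q \<in> b. P q}"
proof
  show "rot180 ` {q \<in> b. P q} \<subseteq> {q \<in> b. P q}" using assms by auto
  show "{q \<in> b. P q} \<subseteq> rot180 ` {q \<in> b. P q}"
  proof
    fix q assume "q \<in> {q \<in> b. P q}"
    then have "rot180 q \<in> {q \<in> b. P q}" using assms by auto
    then show "q \<in> rot180 ` {q \<in> b. P q}" by (metis image_eqI rot_inv)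
  qed
qed

lemma classA_val: "pos_class classA = [True, True, False, False, True, True]"
proof -
  have a: "{q \<in> classA. (fst q + snd q) mod 3 = 0} = {(3,3)}"
          "{q \<in> classA. (fst q + snd q) mod 3 = 1} = {(2,2)}"
          "{q \<in> classA. (fst q + snd q) mod 3 = 2} = {(2,3),(3,2)}"
          "{q \<in> classA. (fst q - snd q) mod 3 = 0} = {(2,2),(3,3)}"
          "{q \<in> classA. (fst q - snd q) mod 3 = 1} = {(3,2)}"
          "{q \<in> classA. (fst q - snd q) mod 3 = 2} = {(2,3)}"
    unfolding classA_def by auto
  show ?thesis unfolding pos_class_def Ncount_def Mcount_def a by simp
qed

lemma single_class:
  "Ncount {q} i = (if (fst q + snd q) mod 3 = i then 1 else 0)"
  "Mcount {q} i = (if (fst q - snd q) mod 3 = i then 1 else 0)"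
proof -
  have "\<And>P. {x \<in> {q}. P x} = (if P q then {q} else {})" by auto
  then show "Ncount {q} i = (if (fst q + snd q) mod 3 = i then 1 else 0)"
    "Mcount {q} i = (if (fst q - snd q) mod 3 = i then 1 else 0)"
    unfolding Ncount_def Mcount_def by simp_all
qed

theorem mainTheorem4:
  fixes b :: "(int \<times> int) set"
  assumes "position b"
    and "solvable b"
    and "rot180 ` b = b"
  shows "pos_class b = pos_class classA"
proof -
  have bB: "b \<subseteq> Board" using assms(1) position_def by simp
  have fin: "finite b" using bB unfolding Board_def by (rule finite_subset) simp
  obtain b' where j: "jump\<^sup>*\<^sup>* b b'" and c: "card b' = 1" using assms(2) solvable_def by blast
  obtain q where q: "b' = {q}" using c card_1_singletonE by blast
  have pc: "pos_class {q} = pos_class b" using star_inv[OF j fin bB] q by simp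
  have m1: "\<And>a c::int. (5 - a + (5 - c)) mod 3 = 0 \<longleftrightarrow> (a + c) mod 3 = 1" by presburger
  have m2: "\<And>a c::int. (5 - a - (5 - c)) mod 3 = 1 \<longleftrightarrow> (a - c) mod 3 = 2" by presburger
  have m3: "\<And>a c::int. (5 - a + (5 - c)) mod 3 = 2 \<longleftrightarrow> (a + c) mod 3 = 2" by presburger
  have m3': "\<And>a c::int. (10 + (- a - c)) mod 3 = 2 \<longleftrightarrow> (a + c) mod 3 = 2" by presburger
  have m4': "\<And>a c::int. (c - a) mod 3 = 0 \<longleftrightarrow> (a - c) mod 3 = 0" by presburger
  have m4: "\<And>a c::int. (5 - a - (5 - c)) mod 3 = 0 \<longleftrightarrow> (a - c) mod 3 = 0" by presburger
  have e1: "{q \<in> b. (fst (rot180 q) + snd (rot180 q)) mod 3 = 0} = {q \<in> b. (fst q + snd q) mod 3 = 1}"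
    unfolding rot180_def using m1 by simp
  have N01: "Ncount b 1 = Ncount b 0"
    unfolding Ncount_def using rot_filter[OF assms(3), of "\<lambda>q. (fst q + snd q) mod 3 = 0"] e1 by simp
  have e2: "{q \<in> b. (fst (rot180 q) - snd (rot180 q)) mod 3 = 1} = {q \<in> b. (fst q - snd q) mod 3 = 2}"
    unfolding rot180_def using m2 by simp
  have M12: "Mcount b 2 = Mcount b 1"
    unfolding Mcount_def using rot_filter[OF assms(3), of "\<lambda>q. (fst q - snd q) mod 3 = 1"] e2 by simp
  have N2: "even (Ncount b 2)"
    unfolding Ncount_def
    by (rule even_sym) (use fin in simp, rule sym_filter[OF assms(3)], simp add: rot180_def m3 m3')
  have M0: "even (Mcount b 0)"
    unfolding Mcount_def
    by (rule even_sym) (use fin in simp, rule sym_filter[OF assms(3)], simp add: rot180_def m4 m4')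
  have "pos_class b = [odd (Ncount b 0), odd (Ncount b 0), False, False, odd (Mcount b 1), odd (Mcount b 1)]"
    unfolding pos_class_def using N01 M12 N2 M0 by simp
  then have "pos_class {q} = [odd (Ncount b 0), odd (Ncount b 0), False, False, odd (Mcount b 1), odd (Mcount b 1)]"
    using pc by simp
  then have c: "\<not> odd (Ncount {q} 0 + Ncount {q} 1)" "\<not> odd (Mcount {q} 1 + Mcount {q} 2)"
    unfolding pos_class_def by simp_all
  have r1: "(fst q + snd q) mod 3 = 0 \<or> (fst q + snd q) mod 3 = 1 \<or> (fst q + snd q) mod 3 = 2" by presburger
  have r2: "(fst q - snd q) mod 3 = 0 \<or> (fst q - snd q) mod 3 = 1 \<or> (fst q - snd q) mod 3 = 2" by presburger
  have "(fst q + snd q) mod 3 = 2" "(fst q - snd q) mod 3 = 0"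
    using c r1 r2 unfolding single_class by auto
  then have "pos_class {q} = [True, True, False, False, True, True]"
    unfolding pos_class_def single_class by simp
  then show ?thesis using pc classA_val by simp
qed

end
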